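(* Let $M,N_c,N_g$ be positive integers with $N_g\le N_c$, let $T_s>0$, and let $S_k^{AD}:[-\pi/2,\pi/2]\times\{0,T_s,\dots,(N_g-1)T_s\}\to[0,\infty)$ be bounded and, for each delay, Riemann integrable in $\theta$. Define the space-frequency channel covariance matrix $$\mathbf{R}_k=\sum_{q=0}^{N_g-1}\int_{-\pi/2}^{\pi/2}\left[\mathbf{f}_{N_c,q}\otimes\mathbf{v}_{M,\theta}\right]\left[\mathbf{f}_{N_c,q}\otimes\mathbf{v}_{M,\theta}\right]^{H} S_k^{AD}(\theta,qT_s)\,d\theta\in\mathbb{C}^{MN_c\times MN_c}.$$ Define $\mathbf{V}_M\in\mathbb{C}^{M\times M}$ by $[\mathbf{V}_M]_{i,j}=\frac{1}{\sqrt{M}}\exp\!\left(-\jmath 2\pi\frac{i(j-M/2)}{M}\right)$ and $\boldsymbol{\Omega}_k\in\mathbb{R}^{M\times N_g}$ by $$[\boldsymbol{\Omega}_k]_{i,j}=MN_c(\theta_{i+1}-\theta_i)\,S_k^{AD}(\theta_i,\tau_j),\qquad \theta_m=\arcsin(2m/M-1),\ \tau_n=nT_s.$$ Then, for fixed non-negative integers $i$ and $j$, $$\lim_{M\to\infty}\Big[\mathbf{R}_k-\left(\mathbf{F}_{N_c\times N_g}\otimes\mathbf{V}_M\right)\mathrm{diag}\{\mathrm{vec}(\boldsymbol{\Omega}_k)\}\left(\mathbf{F}_{N_c\times N_g}\otimes\mathbf{V}_M\right)^{H}\Big]_{i,j}=0,$$ i.e. as $M\to\infty$, $\mathbf{R}_k$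 tends entrywise to $\left(\mathbf{F}_{N_c\times N_g}\otimes\mathbf{V}_M\right)\mathrm{diag}\{\mathrm{vec}(\boldsymbol{\Omega}_k)\}\left(\mathbf{F}_{N_c\times N_g}\otimes\mathbf{V}_M\right)^{H}$.
   Context: $\jmath=\sqrt{-1}$. Matrix/vector element indices start at $0$. $\mathbf{F}_N$ is the $N\times N$ unitary DFT matrix, $[\mathbf{F}_N]_{i,j}=\frac{1}{\sqrt N}e^{-\jmath 2\pi ij/N}$; $\mathbf{F}_{N\times G}$ is the matrix of the first $G$ columns of $\mathbf{F}_N$; $\mathbf{f}_{N,q}$ is the $q$th column of $\sqrt{N}\mathbf{F}_N$. The array response vector is $\mathbf{v}_{M,\theta}=[1,\ e^{-\jmath\pi\sin\theta},\ \dots,\ e^{-\jmath\pi(M-1)\sin\theta}]^T\in\mathbb{C}^{M}$. $\otimes$ is the Kronecker product, $\mathrm{vec}(\cdot)$ stacks columns, $\mathrm{diag}\{\mathbf{x}\}$ is the diagonal matrix with $\mathbf{x}$ on its diagonal. $S_k^{AD}(\theta,\tau)$ is the power angle-delay spectrum of user $k$. *)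

theory Defs
  imports "HOL-Analysis.Analysis"
begin

text \<open>Matrices/vectors are functions of 0-based natural indices; dimensions are
  carried explicitly where needed (Kronecker products, summations).\<close>


definition riemann_has_integral :: "(real \<Rightarrow> real) \<Rightarrow> real \<Rightarrow> real \<Rightarrow> real \<Rightarrow> bool" where
  "riemann_has_integral f a b I \<longleftrightarrow>
     (\<forall>e>0. \<exists>d>0. \<forall>(n::nat) (x::nat \<Rightarrow> real) (t::nat \<Rightarrow> real).
        (x 0 = a \<and> x n = b \<and>
         (\<forall>i<n. x i < x (Suc i) \<and> x (Suc i) - x i < d \<and> x i \<le> t i \<and> t i \<le> x (Suc i)))
        \<longrightarrow> \<bar>(\<Sum>i<n. f (t i) * (x (Suc i) - x i)) - I\<bar> < e)"

definition riemann_integrable :: "(real \<Rightarrow> real) \<Rightarrow> real \<Rightarrow> real \<Rightarrow> bool" where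
  "riemann_integrable f a b \<longleftrightarrow> (\<exists>I. riemann_has_integral f a b I)"

text \<open>Unitary DFT matrix F_N; also F_{N x G} (first G columns, same entries).\<close>
definition dft :: "nat \<Rightarrow> nat \<Rightarrow> nat \<Rightarrow> complex" where
  "dft N i j = complex_of_real (1 / sqrt (real N)) *
     exp (- \<i> * complex_of_real (2 * pi * real i * real j / real N))"

text \<open>f_{N,q}: q-th column of sqrt N * F_N, as a vector indexed by a.\<close>
definition fcol :: "nat \<Rightarrow> nat \<Rightarrow> nat \<Rightarrow> complex" where
  "fcol N q a = exp (- \<i> * complex_of_real (2 * pi * real q * real a / real N))"

definition arr_resp :: "real \<Rightarrow> nat \<Rightarrow> complex" where
  "arr_resp \<theta> b = exp (- \<i> * complex_of_real (pi * real b * sin \<theta>))"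

definition kron_vec :: "nat \<Rightarrow> (nat \<Rightarrow> complex) \<Rightarrow> (nat \<Rightarrow> complex) \<Rightarrow> nat \<Rightarrow> complex" where
  "kron_vec n2 x y i = x (i div n2) * y (i mod n2)"

definition kron_mat :: "nat \<Rightarrow> nat \<Rightarrow> (nat \<Rightarrow> nat \<Rightarrow> complex) \<Rightarrow> (nat \<Rightarrow> nat \<Rightarrow> complex)
     \<Rightarrow> nat \<Rightarrow> nat \<Rightarrow> complex" where
  "kron_mat m2 n2 A B i j = A (i div m2) (j div n2) * B (i mod m2) (j mod n2)"

definition outer :: "(nat \<Rightarrow> complex) \<Rightarrow> nat \<Rightarrow> nat \<Rightarrow> complex" where
  "outer u i j = u i * cnj (u j)"

definition mat_mult :: "nat \<Rightarrow> (nat \<Rightarrow> nat \<Rightarrow> complex) \<Rightarrow> (nat \<Rightarrow> nat \<Rightarrow> complex) \<Rightarrow> nat \<Rightarrow> nat \<Rightarrow> complex" where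
  "mat_mult n A B i j = (\<Sum>l<n. A i l * B l j)"

definition mat_adj :: "(nat \<Rightarrow> nat \<Rightarrow> complex) \<Rightarrow> nat \<Rightarrow> nat \<Rightarrow> complex" where
  "mat_adj A i j = cnj (A j i)"

definition diag_mat :: "(nat \<Rightarrow> complex) \<Rightarrow> nat \<Rightarrow> nat \<Rightarrow> complex" where
  "diag_mat w i j = (if i = j then w i else 0)"

definition vec_mat :: "nat \<Rightarrow> (nat \<Rightarrow> nat \<Rightarrow> 'a) \<Rightarrow> nat \<Rightarrow> 'a" where
  "vec_mat m A l = A (l mod m) (l div m)"

definition Rk :: "nat \<Rightarrow> nat \<Rightarrow> nat \<Rightarrow> real \<Rightarrow> (real \<Rightarrow> real \<Rightarrow> real) \<Rightarrow> nat \<Rightarrow> nat \<Rightarrow> complex" where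
  "Rk M Nc Ng Ts S i j = (\<Sum>q<Ng. integral {-pi/2..pi/2}
      (\<lambda>\<theta>. outer (kron_vec M (fcol Nc q) (arr_resp \<theta>)) i j * complex_of_real (S \<theta> (real q * Ts))))"

definition VM :: "nat \<Rightarrow> nat \<Rightarrow> nat \<Rightarrow> complex" where
  "VM M i j = complex_of_real (1 / sqrt (real M)) *
     exp (- \<i> * complex_of_real (2 * pi * real i * (real j - real M / 2) / real M))"

definition theta_grid :: "nat \<Rightarrow> nat \<Rightarrow> real" where
  "theta_grid M m = arcsin (2 * real m / real M - 1)"

definition Omega :: "nat \<Rightarrow> nat \<Rightarrow> real \<Rightarrow> (real \<Rightarrow> real \<Rightarrow> real) \<Rightarrow> nat \<Rightarrow> nat \<Rightarrow> real" where
  "Omega M Nc Ts S i j = real M * real Nc * (theta_grid M (Suc i) - theta_grid M i)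
      * S (theta_grid M i) (real j * Ts)"

definition Rk_approx :: "nat \<Rightarrow> nat \<Rightarrow> nat \<Rightarrow> real \<Rightarrow> (real \<Rightarrow> real \<Rightarrow> real) \<Rightarrow> nat \<Rightarrow> nat \<Rightarrow> complex" where
  "Rk_approx M Nc Ng Ts S =
     (let K = kron_mat M M (dft Nc) (VM M)
      in mat_mult (Ng * M)
           (mat_mult (Ng * M) K
              (diag_mat (vec_mat M (\<lambda>a b. complex_of_real (Omega M Nc Ts S a b)))))
           (mat_adj K))"

end

theory Submission
  imports Defs
begin

lemma prod_integrable:
  fixes f :: "real \<Rightarrow> real" and g :: "real \<Rightarrow> complex"
  assumes f: "f integrable_on {c..d}" and fb: "\<And>y. y \<in> {c..d} \<Longrightarrow> \<bar>f y\<bar> \<le> B"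
    and g: "continuous_on {c..d} g"
  shows "(\<lambda>y. g y * complex_of_real (f y)) integrable_on {c..d}"
proof -
  obtain G where G0: "\<forall>y\<in>{c..d}. norm (g y) \<le> G"
    using compact_imp_bounded[OF compact_continuous_image[OF g compact_Icc]]
    unfolding bounded_iff by blast
  then have G: "\<And>y. y \<in> {c..d} \<Longrightarrow> norm (g y) \<le> G" by blast
  have f': "(\<lambda>y. complex_of_real (f y)) integrable_on {c..d}"
    using f has_integral_of_real by (metis integrable_on_def)
  have m1: "g \<in> borel_measurable (lebesgue_on {c..d})"
    by (rule continuous_imp_measurable_on_sets_lebesgue[OF g]) auto
  have m2: "(\<lambda>y. complex_of_real (f y)) \<in> borel_measurable (lebesgue_on {c..d})"
    by (rule integrable_imp_measurable[OF f'])
  have "(\<lambda>y. g y * complex_of_real (f y)) absolutely_integrable_on {c..d}"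
  proof (rule measurable_bounded_by_integrable_imp_absolutely_integrable)
    show "(\<lambda>y. g y * complex_of_real (f y)) \<in> borel_measurable (lebesgue_on {c..d})"
      using m1 m2 by (rule borel_measurable_times)
    show "(\<lambda>y. G * B) integrable_on {c..d}" by (metis has_integral_const_real integrable_on_def)
    show "norm (g y * complex_of_real (f y)) \<le> G * B" if "y \<in> {c..d}" for y
      using G[OF that] fb[OF that]
      by (simp add: norm_mult mult_mono' abs_le_iff mult_mono)
  qed auto
  then show ?thesis by (simp add: absolutely_integrable_on_def)
qed

lemma chain_mono: "\<forall>i<n. x i \<le> x (Suc i) \<Longrightarrow> k \<le> n \<Longrightarrow> (x 0::real) \<le> x k"
  by (induction k) (auto intro: order_trans)

lemma step_below:
  fixes f :: "real \<Rightarrow> real"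
  assumes "\<forall>i<n. x i \<le> x (Suc i)" "\<forall>i<n. \<forall>y\<in>{x i..x (Suc i)}. c i \<le> f y"
  shows "\<exists>\<phi>. (\<phi> has_integral (\<Sum>i<n. c i * (x (Suc i) - x i))) {x 0..x n} \<and> (\<forall>y\<in>{x 0..x n}. \<phi> y \<le> f y)"
  using assms
proof (induction n)
  case 0
  then show ?case by (intro exI[of _ f]) auto
next
  case (Suc n)
  then obtain \<phi> where \<phi>: "(\<phi> has_integral (\<Sum>i<n. c i * (x (Suc i) - x i))) {x 0..x n}"
    "\<forall>y\<in>{x 0..x n}. \<phi> y \<le> f y" by auto
  define \<psi> where "\<psi> y = (if y \<le> x n then \<phi> y else c n)" for y
  have le: "x 0 \<le> x n" using chain_mono[of "Suc n" x n] Suc.prems by auto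
  have le2: "x n \<le> x (Suc n)" using Suc.prems by auto
  have 1: "(\<psi> has_integral (\<Sum>i<n. c i * (x (Suc i) - x i))) {x 0..x n}"
    by (rule has_integral_spike_finite[OF _ _ \<phi>(1), of "{}"]) (auto simp: \<psi>_def)
  have "((\<lambda>y. c n) has_integral (c n * (x (Suc n) - x n))) {x n..x (Suc n)}"
    using has_integral_const_real[of "c n" "x n" "x (Suc n)"] le2 by (simp add: mult.commute)
  then have 2: "(\<psi> has_integral (c n * (x (Suc n) - x n))) {x n..x (Suc n)}"
    by (rule has_integral_spike_finite[of "{x n}", rotated 2]) (auto simp: \<psi>_def)
  have "(\<psi> has_integral (\<Sum>i<Suc n. c i * (x (Suc i) - x i))) {x 0..x (Suc n)}"
    using has_integral_combine[OF le le2 1 2] by simp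
  moreover have "\<forall>y\<in>{x 0..x (Suc n)}. \<psi> y \<le> f y"
    using \<phi>(2) Suc.prems by (auto simp: \<psi>_def)
  ultimately show ?case by blast
qed

lemma chain_mono': "\<forall>i<n. x i \<le> x (Suc i) \<Longrightarrow> j \<le> k \<Longrightarrow> k \<le> n \<Longrightarrow> (x j::real) \<le> x k"
proof (induction k)
  case 0 then show ?case by simp
next
  case (Suc k)
  then show ?case by (cases "j = Suc k") (auto intro: order_trans)
qed

definition part :: "(nat \<Rightarrow> real) \<Rightarrow> nat \<Rightarrow> real \<Rightarrow> real \<Rightarrow> real \<Rightarrow> bool" where
  "part x n a b d \<longleftrightarrow> x 0 = a \<and> x n = b \<and> (\<forall>i<n. x i < x (Suc i) \<and> x (Suc i) - x i < d)"

lemma part_cell: "part x n a b d \<Longrightarrow> i < n \<Longrightarrow> a \<le> x i \<and> x (Suc i) \<le> b"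
proof -
  assume P: "part x n a b d" and i: "i < n"
  have m: "\<forall>i<n. x i \<le> x (Suc i)" using P by (auto simp: part_def less_imp_le)
  show ?thesis using chain_mono'[OF m, of 0 i] chain_mono'[OF m, of "Suc i" n] P i
    by (auto simp: part_def)
qed

lemma part_sum: "part x n a b d \<Longrightarrow> (\<Sum>i<n. x (Suc i) - x i) = b - a"
  unfolding part_def by (simp add: sum_lessThan_telescope)

lemma sup_inf_cell:
  fixes f :: "real \<Rightarrow> real"
  assumes "\<forall>y\<in>{a..b}. \<bar>f y\<bar> \<le> B" "a \<le> c" "d \<le> b" "y \<in> {c..d}"
  shows "Inf (f`{c..d}) \<le> f y" "f y \<le> Sup (f`{c..d})"
    "bdd_above (f`{c..d})" "bdd_below (f`{c..d})"
proof -
  show ba: "bdd_above (f`{c..d})" using assms unfolding bdd_above_def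
    by (intro exI[of _ B]) (force simp: abs_le_iff)
  show bb: "bdd_below (f`{c..d})" using assms unfolding bdd_below_def
  proof (intro exI[of _ "-B"] ballI)
    fix z assume "z \<in> f`{c..d}"
    then obtain w where "w \<in> {c..d}" "z = f w" by auto
    then have "w \<in> {a..b}" using assms(2,3) by auto
    then have "\<bar>f w\<bar> \<le> B" using assms(1) by blast
    then show "- B \<le> z" using \<open>z = f w\<close> by linarith
  qed
  show "Inf (f`{c..d}) \<le> f y" using bb assms(4) by (simp add: cInf_lower)
  show "f y \<le> Sup (f`{c..d})" using ba assms(4) by (simp add: cSup_upper)
qed

lemma osc:
  fixes f :: "real \<Rightarrow> real"
  assumes R: "riemann_has_integral f a b I" and fb: "\<forall>y\<in>{a..b}. \<bar>f y\<bar> \<le> B" and e: "e > 0"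
  shows "\<exists>d>0. \<forall>n x. part x n a b d \<longrightarrow>
     (\<Sum>i<n. (Sup (f`{x i..x (Suc i)}) - Inf (f`{x i..x (Suc i)})) * (x (Suc i) - x i)) \<le> e"
proof -
  obtain d where d: "d > 0" and D: "\<And>n x t. x 0 = a \<Longrightarrow> x n = b \<Longrightarrow>
      (\<forall>i<n. x i < x (Suc i) \<and> x (Suc i) - x i < d \<and> x i \<le> t i \<and> t i \<le> x (Suc i)) \<Longrightarrow>
      \<bar>(\<Sum>i<n. f (t i) * (x (Suc i) - x i)) - I\<bar> < e/2"
  proof -
    have "e/2 > 0" using e by simp
    from R[unfolded riemann_has_integral_def, rule_format, OF this]
    obtain d where "d > 0" and "\<forall>n x t. (x 0 = a \<and> x n = b \<and>
         (\<forall>i<n. x i < x (Suc i) \<and> x (Suc i) - x i < d \<and> x i \<le> t i \<and> t i \<le> x (Suc i)))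
        \<longrightarrow> \<bar>(\<Sum>i<n. f (t i) * (x (Suc i) - x i)) - I\<bar> < e/2" by blast
    then show ?thesis using that by blast
  qed
  show ?thesis
  proof (intro exI[of _ d] conjI allI impI d)
    fix n x assume P: "part x n a b d"
    define mx where "mx i = Sup (f`{x i..x (Suc i)})" for i
    define mn where "mn i = Inf (f`{x i..x (Suc i)})" for i
    have m: "\<forall>i<n. x i \<le> x (Suc i)" using P by (auto simp: part_def less_imp_le)
    have ab: "a \<le> b" using chain_mono'[OF m, of 0 n] P by (auto simp: part_def)
    have cellI: "\<And>i. i < n \<Longrightarrow> {x i..x (Suc i)} \<noteq> {}" using P unfolding part_def by auto
    have key: "(\<Sum>i<n. (mx i - mn i) * (x (Suc i) - x i)) \<le> e + 2 * \<eta> * (b - a)" if \<eta>: "\<eta> > 0" for \<eta>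
    proof -
      have "\<forall>i\<in>{..<n}. \<exists>t. t \<in> {x i..x (Suc i)} \<and> mx i - \<eta> < f t"
      proof
        fix i assume i: "i \<in> {..<n}"
        have "mx i - \<eta> < Sup (f`{x i..x (Suc i)})" using \<eta> by (simp add: mx_def)
        moreover have "bdd_above (f`{x i..x (Suc i)})" "f`{x i..x (Suc i)} \<noteq> {}"
          using sup_inf_cell(3)[OF fb, of "x i" "x (Suc i)" "x i"] part_cell[OF P, of i] cellI[of i] i
          by auto
        ultimately show "\<exists>t. t \<in> {x i..x (Suc i)} \<and> mx i - \<eta> < f t"
          using less_cSup_iff[of "f`{x i..x (Suc i)}" "mx i - \<eta>"] by auto
      qed
      then obtain t where t: "\<forall>i\<in>{..<n}. t i \<in> {x i..x (Suc i)} \<and> mx i - \<eta> < f (t i)"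
        by (metis bchoice)
      have "\<forall>i\<in>{..<n}. \<exists>s. s \<in> {x i..x (Suc i)} \<and> f s < mn i + \<eta>"
      proof
        fix i assume i: "i \<in> {..<n}"
        have "Inf (f`{x i..x (Suc i)}) < mn i + \<eta>" using \<eta> by (simp add: mn_def)
        moreover have "bdd_below (f`{x i..x (Suc i)})" "f`{x i..x (Suc i)} \<noteq> {}"
          using sup_inf_cell(4)[OF fb, of "x i" "x (Suc i)" "x i"] part_cell[OF P, of i] cellI[of i] i
          by auto
        ultimately show "\<exists>s. s \<in> {x i..x (Suc i)} \<and> f s < mn i + \<eta>"
          using cInf_less_iff[of "f`{x i..x (Suc i)}" "mn i + \<eta>"] by auto
      qed
      then obtain s where s: "\<forall>i\<in>{..<n}. s i \<in> {x i..x (Suc i)} \<and> f (s i) < mn i + \<eta>"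
        by (metis bchoice)
      have St: "\<bar>(\<Sum>i<n. f (t i) * (x (Suc i) - x i)) - I\<bar> < e/2"
        using P t by (intro D) (auto simp: part_def)
      have Ss: "\<bar>(\<Sum>i<n. f (s i) * (x (Suc i) - x i)) - I\<bar> < e/2"
        using P s by (intro D) (auto simp: part_def)
      have "(\<Sum>i<n. (mx i - mn i) * (x (Suc i) - x i)) \<le>
            (\<Sum>i<n. (f (t i) - f (s i) + 2 * \<eta>) * (x (Suc i) - x i))"
      proof (rule sum_mono)
        fix i assume i: "i \<in> {..<n}"
        have "0 < x (Suc i) - x i" using P i by (auto simp: part_def)
        moreover have "mx i - mn i \<le> f (t i) - f (s i) + 2 * \<eta>" using t s i by force
        ultimately show "(mx i - mn i) * (x (Suc i) - x i) \<le> (f (t i) - f (s i) + 2 * \<eta>) * (x (Suc i) - x i)"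
          by (simp add: mult_right_mono)
      qed
      also have "\<dots> = (\<Sum>i<n. f (t i) * (x (Suc i) - x i)) - (\<Sum>i<n. f (s i) * (x (Suc i) - x i))
          + 2 * \<eta> * (\<Sum>i<n. x (Suc i) - x i)"
        by (simp add: algebra_simps sum.distrib sum_subtractf sum_distrib_left)
      also have "\<dots> \<le> e + 2 * \<eta> * (b - a)"
        unfolding part_sum[OF P] using St Ss unfolding abs_less_iff by linarith
      finally show ?thesis .
    qed
    show "(\<Sum>i<n. (Sup (f`{x i..x (Suc i)}) - Inf (f`{x i..x (Suc i)})) * (x (Suc i) - x i)) \<le> e"
      unfolding mx_def[symmetric] mn_def[symmetric]
    proof (rule field_le_epsilon)
      fix \<epsilon> :: real assume "\<epsilon> > 0"
      define \<eta> where "\<eta> = \<epsilon> / (2 * (b - a) + 1)"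
      have p: "2 * (b - a) + 1 > 0" using ab by simp
      have "\<eta> > 0" using \<open>\<epsilon> > 0\<close> p by (simp add: \<eta>_def)
      have "2 * \<eta> * (b - a) \<le> \<epsilon>"
      proof -
        have "2 * \<eta> * (b - a) = \<epsilon> * (2 * (b - a)) / (2 * (b - a) + 1)" by (simp add: \<eta>_def)
        also have "\<dots> \<le> \<epsilon>" using p \<open>\<epsilon> > 0\<close> by (simp add: divide_le_eq)
        finally show ?thesis .
      qed
      then show "(\<Sum>i<n. (mx i - mn i) * (x (Suc i) - x i)) \<le> e + \<epsilon>"
        using key[OF \<open>\<eta> > 0\<close>] by linarith
    qed
  qed
qed


lemma riem_integrable:
  fixes f :: "real \<Rightarrow> real"
  assumes ab: "a < b" and R: "riemann_has_integral f a b I" and fb: "\<forall>y\<in>{a..b}. \<bar>f y\<bar> \<le> B"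
  shows "f integrable_on {a..b}"
proof -
  have "f integrable_on cbox a b"
  proof (rule integrable_straddle_interval)
    fix e :: real assume e: "e > 0"
    then have "e/2 > 0" by simp
    from osc[OF R fb this] obtain d where d: "d > 0" and Dd: "\<And>n x. part x n a b d \<Longrightarrow>
     (\<Sum>i<n. (Sup (f`{x i..x (Suc i)}) - Inf (f`{x i..x (Suc i)})) * (x (Suc i) - x i)) \<le> e/2"
      by blast
    obtain n :: nat where n: "(b - a) / d < real n" using reals_Archimedean2 by blast
    have npos: "real n > 0" using n ab d by (smt (verit) divide_pos_pos)
    define x where "x i = a + real i * (b - a) / real n" for i
    have P: "part x n a b d"
      unfolding part_def
    proof (intro conjI allI impI)
      show "x 0 = a" by (simp add: x_def)
      show "x n = b" using npos by (simp add: x_def)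
      fix i assume "i < n"
      have eq: "x (Suc i) - x i = (b - a) / real n" using npos by (simp add: x_def field_simps)
      have "(b - a) / real n > 0" using ab npos by simp
      then show "x i < x (Suc i)" using eq by linarith
      have "b - a < real n * d" using n d by (simp add: field_simps)
      then have "(b - a) / real n < d" using npos by (simp add: pos_divide_less_eq mult.commute)
      then show "x (Suc i) - x i < d" using eq by linarith
    qed
    define mx where "mx i = Sup (f`{x i..x (Suc i)})" for i
    define mn where "mn i = Inf (f`{x i..x (Suc i)})" for i
    have mono: "\<forall>i<n. x i \<le> x (Suc i)" using P by (auto simp: part_def less_imp_le)
    have b1: "\<forall>i<n. \<forall>y\<in>{x i..x (Suc i)}. mn i \<le> f y"
      using sup_inf_cell(1)[OF fb] part_cell[OF P] by (auto simp: mn_def)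
    have b2: "\<forall>i<n. \<forall>y\<in>{x i..x (Suc i)}. - mx i \<le> - f y"
      using sup_inf_cell(2)[OF fb] part_cell[OF P] by (auto simp: mx_def)
    obtain \<phi> where \<phi>: "(\<phi> has_integral (\<Sum>i<n. mn i * (x (Suc i) - x i))) {x 0..x n}"
      "\<forall>y\<in>{x 0..x n}. \<phi> y \<le> f y" using step_below[OF mono b1] by blast
    obtain \<psi> where \<psi>: "(\<psi> has_integral (\<Sum>i<n. - mx i * (x (Suc i) - x i))) {x 0..x n}"
      "\<forall>y\<in>{x 0..x n}. \<psi> y \<le> - f y" using step_below[OF mono b2] by blast
    have x0: "x 0 = a" and xn: "x n = b" using P by (auto simp: part_def)
    have \<psi>': "((\<lambda>y. - \<psi> y) has_integral - (\<Sum>i<n. - mx i * (x (Suc i) - x i))) (cbox a b)"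
      using has_integral_neg[OF \<psi>(1)] x0 xn by simp
    have \<phi>': "(\<phi> has_integral (\<Sum>i<n. mn i * (x (Suc i) - x i))) (cbox a b)"
      using \<phi>(1) x0 xn by simp
    have diff: "- (\<Sum>i<n. - mx i * (x (Suc i) - x i)) - (\<Sum>i<n. mn i * (x (Suc i) - x i))
        = (\<Sum>i<n. (mx i - mn i) * (x (Suc i) - x i))"
      by (simp add: sum_subtractf[symmetric] sum_negf[symmetric] algebra_simps)
    have nn: "0 \<le> (\<Sum>i<n. (mx i - mn i) * (x (Suc i) - x i))"
    proof (rule sum_nonneg)
      fix i assume i: "i \<in> {..<n}"
      have "mn i \<le> f (x i)" "f (x i) \<le> mx i" using b1 b2 i mono by auto
      then show "0 \<le> (mx i - mn i) * (x (Suc i) - x i)" using mono i by simp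
    qed
    have "(\<Sum>i<n. (mx i - mn i) * (x (Suc i) - x i)) \<le> e/2"
      using Dd[OF P] by (simp add: mx_def mn_def)
    then have "\<bar>(\<Sum>i<n. mn i * (x (Suc i) - x i)) - - (\<Sum>i<n. - mx i * (x (Suc i) - x i))\<bar> < e"
      using diff nn e by linarith
    moreover have "\<forall>y\<in>cbox a b. \<phi> y \<le> f y \<and> f y \<le> - \<psi> y" using \<phi>(2) \<psi>(2) x0 xn by force
    ultimately show "\<exists>g h i j. (g has_integral i) (cbox a b) \<and> (h has_integral j) (cbox a b) \<and>
             \<bar>i - j\<bar> < e \<and> (\<forall>x\<in>cbox a b. g x \<le> f x \<and> f x \<le> h x)"
      using \<phi>' \<psi>' by blast
  qed
  then show ?thesis by simp
qed

lemma sum_cells: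
  fixes h :: "real \<Rightarrow> complex"
  assumes "\<forall>i<n. x i \<le> x (Suc i)" "h integrable_on {x 0..x n}"
    "\<forall>i<n. norm (integral {x i..x (Suc i)} h - c i) \<le> r i"
  shows "norm (integral {x 0..x n} h - (\<Sum>i<n. c i)) \<le> (\<Sum>i<n. r i)"
  using assms
proof (induction n)
  case 0 then show ?case by simp
next
  case (Suc n)
  have le: "x 0 \<le> x n" using chain_mono[of "Suc n" x n] Suc.prems by auto
  have le2: "x n \<le> x (Suc n)" using Suc.prems by auto
  have i1: "h integrable_on {x 0..x n}"
    using integrable_subinterval_real[OF Suc.prems(2)] le2 by auto
  have IH: "norm (integral {x 0..x n} h - (\<Sum>i<n. c i)) \<le> (\<Sum>i<n. r i)"
    using Suc.IH[OF _ i1] Suc.prems by auto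
  have split: "integral {x 0..x n} h + integral {x n..x (Suc n)} h = integral {x 0..x (Suc n)} h"
    by (rule Henstock_Kurzweil_Integration.integral_combine[OF le le2 Suc.prems(2)])
  have c: "norm (integral {x n..x (Suc n)} h - c n) \<le> r n" using Suc.prems by auto
  have "integral {x 0..x (Suc n)} h - (\<Sum>i<Suc n. c i) =
      (integral {x 0..x n} h - (\<Sum>i<n. c i)) + (integral {x n..x (Suc n)} h - c n)"
    using split by simp
  then have "norm (integral {x 0..x (Suc n)} h - (\<Sum>i<Suc n. c i)) \<le>
      norm (integral {x 0..x n} h - (\<Sum>i<n. c i)) + norm (integral {x n..x (Suc n)} h - c n)"
    by (metis norm_triangle_ineq)
  then show ?case using IH c by simp
qed

lemma cell_bound:
  fixes f :: "real \<Rightarrow> real" and g :: "real \<Rightarrow> complex"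
  assumes cd: "c < d" and fi: "f integrable_on {c..d}" and fb: "\<forall>y\<in>{c..d}. \<bar>f y\<bar> \<le> B"
    and B: "0 \<le> B" and g: "continuous_on {c..d} g"
    and w: "\<forall>y\<in>{c..d}. norm (g y - g c) \<le> \<omega>" and w0: "0 \<le> \<omega>" and G: "norm (g c) \<le> G"
    and mM: "\<forall>y\<in>{c..d}. m \<le> f y \<and> f y \<le> M"
  shows "norm (integral {c..d} (\<lambda>y. g y * of_real (f y)) - g c * of_real (f c) * of_real (d - c))
     \<le> \<omega> * B * (d - c) + G * ((M - m) * (d - c))"
proof -
  define k where "k y = (g y - g c) * complex_of_real (f y)" for y
  have gk: "continuous_on {c..d} (\<lambda>y. g y - g c)" using g by (intro continuous_intros)
  have ki: "k integrable_on {c..d}"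
    unfolding k_def using prod_integrable[OF fi _ gk, of B] fb by auto
  then have k1: "(k has_integral integral {c..d} k) {c..d}" by (simp add: integrable_integral)
  have f1: "((\<lambda>y. complex_of_real (f y)) has_integral of_real (integral {c..d} f)) {c..d}"
    using has_integral_of_real[OF integrable_integral[OF fi]] .
  have "((\<lambda>y. k y + g c * complex_of_real (f y)) has_integral
        (integral {c..d} k + g c * of_real (integral {c..d} f))) {c..d}"
    by (rule has_integral_add[OF k1 has_integral_mult_right[OF f1]])
  moreover have "(\<lambda>y. k y + g c * complex_of_real (f y)) = (\<lambda>y. g y * of_real (f y))"
    by (auto simp: k_def algebra_simps)
  ultimately have hI: "integral {c..d} (\<lambda>y. g y * of_real (f y)) =
        integral {c..d} k + g c * of_real (integral {c..d} f)"
    by (simp add: integral_unique)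
  have kb: "norm (integral {c..d} k) \<le> \<omega> * B * (d - c)"
  proof -
    have k1': "(k has_integral integral {c..d} k) (cbox c d)" using k1 by simp
    have hb: "norm (k y) \<le> \<omega> * B" if "y \<in> cbox c d" for y
    proof -
      from that have y: "y \<in> {c..d}" by simp
      have "norm (k y) = norm (g y - g c) * \<bar>f y\<bar>" by (simp add: k_def norm_mult)
      also have "\<dots> \<le> \<omega> * B" using w y fb w0 by (intro mult_mono) auto
      finally show "norm (k y) \<le> \<omega> * B" .
    qed
    show ?thesis using has_integral_bound[OF _ k1' hb] w0 B cd by simp
  qed
  have lo: "m * (d - c) \<le> integral {c..d} f"
  proof -
    have "integral {c..d} (\<lambda>y. m) \<le> integral {c..d} f"
      by (rule integral_le[OF _ fi]) (use mM in \<open>auto intro: integrable_const_ivl\<close>)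
    then show ?thesis using cd by (simp add: mult.commute)
  qed
  have hi: "integral {c..d} f \<le> M * (d - c)"
  proof -
    have "integral {c..d} f \<le> integral {c..d} (\<lambda>y. M)"
      by (rule integral_le[OF fi]) (use mM in \<open>auto intro: integrable_const_ivl\<close>)
    then show ?thesis using cd by (simp add: mult.commute)
  qed
  have fc: "m \<le> f c" "f c \<le> M" using mM cd by auto
  have dd: "\<bar>integral {c..d} f - f c * (d - c)\<bar> \<le> (M - m) * (d - c)"
  proof -
    have "m * (d - c) \<le> f c * (d - c)" "f c * (d - c) \<le> M * (d - c)"
      using fc cd by (auto intro: mult_right_mono)
    then show ?thesis using lo hi by (simp add: abs_le_iff algebra_simps)
  qed
  have "integral {c..d} (\<lambda>y. g y * of_real (f y)) - g c * of_real (f c) * of_real (d - c)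
      = integral {c..d} k + g c * of_real (integral {c..d} f - f c * (d - c))"
    using hI by (simp add: algebra_simps)
  also have "norm \<dots> \<le> norm (integral {c..d} k) + norm (g c) * \<bar>integral {c..d} f - f c * (d - c)\<bar>"
    by (metis norm_triangle_ineq norm_mult norm_of_real)
  also have "\<dots> \<le> \<omega> * B * (d - c) + G * ((M - m) * (d - c))"
    using kb dd G order_trans[OF norm_ge_zero G] by (intro add_mono mult_mono) auto
  finally show ?thesis .
qed


lemma conv:
  fixes f :: "real \<Rightarrow> real" and g :: "real \<Rightarrow> complex"
  assumes ab: "a < b" and R: "riemann_has_integral f a b I" and fb: "\<forall>y\<in>{a..b}. \<bar>f y\<bar> \<le> B"
    and g: "continuous_on {a..b} g" and e: "e > 0"
  shows "\<exists>d>0. \<forall>n x. part x n a b d \<longrightarrow>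
    norm (integral {a..b} (\<lambda>y. g y * of_real (f y)) -
      (\<Sum>i<n. g (x i) * of_real (f (x i)) * of_real (x (Suc i) - x i))) < e"
proof -
  have fi: "f integrable_on {a..b}" by (rule riem_integrable[OF ab R fb])
  have hi: "(\<lambda>y. g y * of_real (f y)) integrable_on {a..b}"
    using prod_integrable[OF fi _ g, of B] fb by auto
  have B0: "0 \<le> B" using fb ab by (meson abs_ge_zero atLeastAtMost_iff less_imp_le order.trans order_refl)
  obtain G where G0: "G > 0" and G: "\<forall>y\<in>{a..b}. norm (g y) \<le> G"
    using compact_imp_bounded[OF compact_continuous_image[OF g compact_Icc]]
    unfolding bounded_pos by auto
  define \<omega> where "\<omega> = e / (4 * (B + 1) * (b - a))"
  have \<omega>0: "\<omega> > 0" using e B0 ab by (simp add: \<omega>_def)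
  have uc: "uniformly_continuous_on {a..b} g"
    by (rule compact_uniformly_continuous[OF g compact_Icc])
  obtain \<delta> where \<delta>: "\<delta> > 0" and U: "\<forall>y\<in>{a..b}. \<forall>y'\<in>{a..b}. dist y' y < \<delta> \<longrightarrow> dist (g y') (g y) < \<omega>"
    using uc \<omega>0 unfolding uniformly_continuous_on_def by blast
  have eG: "e / (4 * G) > 0" using e G0 by simp
  obtain d1 where d1: "d1 > 0" and D1: "\<And>n x. part x n a b d1 \<Longrightarrow>
     (\<Sum>i<n. (Sup (f`{x i..x (Suc i)}) - Inf (f`{x i..x (Suc i)})) * (x (Suc i) - x i)) \<le> e / (4 * G)"
    using osc[OF R fb eG] by blast
  show ?thesis
  proof (intro exI[of _ "min \<delta> d1"] conjI allI impI)
    show "min \<delta> d1 > 0" using \<delta> d1 by simp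
    fix n x assume P: "part x n a b (min \<delta> d1)"
    have P1: "part x n a b d1" using P by (auto simp: part_def)
    define mx where "mx i = Sup (f`{x i..x (Suc i)})" for i
    define mn where "mn i = Inf (f`{x i..x (Suc i)})" for i
    have mono: "\<forall>i<n. x i \<le> x (Suc i)" using P by (auto simp: part_def less_imp_le)
    have x0: "x 0 = a" and xn: "x n = b" using P by (auto simp: part_def)
    have cells: "\<forall>i<n. norm (integral {x i..x (Suc i)} (\<lambda>y. g y * of_real (f y)) -
        g (x i) * of_real (f (x i)) * of_real (x (Suc i) - x i))
      \<le> \<omega> * B * (x (Suc i) - x i) + G * ((mx i - mn i) * (x (Suc i) - x i))"
    proof (intro allI impI)
      fix i assume i: "i < n"
      have sub: "a \<le> x i" "x (Suc i) \<le> b" using part_cell[OF P i] by auto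
      have lt: "x i < x (Suc i)" "x (Suc i) - x i < \<delta>" using P i by (auto simp: part_def)
      have subset: "{x i..x (Suc i)} \<subseteq> {a..b}" using sub by auto
      show "norm (integral {x i..x (Suc i)} (\<lambda>y. g y * of_real (f y)) -
        g (x i) * of_real (f (x i)) * of_real (x (Suc i) - x i))
      \<le> \<omega> * B * (x (Suc i) - x i) + G * ((mx i - mn i) * (x (Suc i) - x i))"
      proof (rule cell_bound)
        show "x i < x (Suc i)" by (rule lt(1))
        show "f integrable_on {x i..x (Suc i)}" by (rule integrable_subinterval_real[OF fi subset])
        show "\<forall>y\<in>{x i..x (Suc i)}. \<bar>f y\<bar> \<le> B" using fb subset by blast
        show "0 \<le> B" by (rule B0)
        show "continuous_on {x i..x (Suc i)} g" using g subset continuous_on_subset by blast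
        show "0 \<le> \<omega>" using \<omega>0 by simp
        show "norm (g (x i)) \<le> G" using G sub lt by auto
        show "\<forall>y\<in>{x i..x (Suc i)}. norm (g y - g (x i)) \<le> \<omega>"
        proof
          fix y assume y: "y \<in> {x i..x (Suc i)}"
          have "dist y (x i) < \<delta>" using y lt by (auto simp: dist_real_def)
          then have "dist (g y) (g (x i)) < \<omega>" using U y subset lt(1) sub by auto
          then show "norm (g y - g (x i)) \<le> \<omega>" by (simp add: dist_norm)
        qed
        show "\<forall>y\<in>{x i..x (Suc i)}. mn i \<le> f y \<and> f y \<le> mx i"
          using sup_inf_cell(1,2)[OF fb sub] by (auto simp: mn_def mx_def)
      qed
    qed
    have main: "norm (integral {x 0..x n} (\<lambda>y. g y * of_real (f y)) -
        (\<Sum>i<n. g (x i) * of_real (f (x i)) * of_real (x (Suc i) - x i)))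
      \<le> (\<Sum>i<n. \<omega> * B * (x (Suc i) - x i) + G * ((mx i - mn i) * (x (Suc i) - x i)))"
      by (rule sum_cells[OF mono _ cells]) (use hi x0 xn in simp)
    have "(\<Sum>i<n. \<omega> * B * (x (Suc i) - x i) + G * ((mx i - mn i) * (x (Suc i) - x i)))
        = \<omega> * B * (b - a) + G * (\<Sum>i<n. (mx i - mn i) * (x (Suc i) - x i))"
      using part_sum[OF P] by (simp add: sum.distrib sum_distrib_left[symmetric])
    also have "\<dots> \<le> e/4 + G * (e / (4 * G))"
    proof (rule add_mono)
      have w1: "\<omega> * (b - a) = e / (4 * (B + 1))" using ab by (simp add: \<omega>_def)
      have "\<omega> * B * (b - a) = B * (\<omega> * (b - a))" by (simp add: ac_simps)
      also have "\<dots> = B * (e / (4 * (B + 1)))" by (simp add: w1)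
      also have "\<dots> \<le> e / 4" using B0 e by (simp add: field_simps)
      finally show "\<omega> * B * (b - a) \<le> e / 4" .
      show "G * (\<Sum>i<n. (mx i - mn i) * (x (Suc i) - x i)) \<le> G * (e / (4 * G))"
        using D1[OF P1] G0 by (intro mult_left_mono) (auto simp: mx_def mn_def)
    qed
    also have "\<dots> < e" using G0 e by simp
    finally show "norm (integral {a..b} (\<lambda>y. g y * of_real (f y)) -
      (\<Sum>i<n. g (x i) * of_real (f (x i)) * of_real (x (Suc i) - x i))) < e"
      using main x0 xn by simp
  qed
qed


lemma mesh:
  assumes d: "d > 0"
  shows "eventually (\<lambda>M. part (theta_grid M) M (-pi/2) (pi/2) d) sequentially"
proof -
  have uc: "uniformly_continuous_on {-1..1} arcsin"
    by (rule compact_uniformly_continuous[OF continuous_on_arcsin' compact_Icc])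
  obtain \<eta> where \<eta>: "\<eta> > 0" and U: "\<forall>u\<in>{-1..1}. \<forall>v\<in>{-1..1}. dist v u < \<eta> \<longrightarrow> dist (arcsin v) (arcsin u) < d"
    using uc d unfolding uniformly_continuous_on_def by blast
  obtain N :: nat where N: "2 / \<eta> < real N" using reals_Archimedean2 by blast
  show ?thesis unfolding eventually_sequentially
  proof (intro exI[of _ "Suc N"] allI impI)
    fix M :: nat assume M: "Suc N \<le> M"
    then have Mpos: "real M > 0" by simp
    have NM: "2 / \<eta> < real M" using N M by simp
    then have step: "2 / real M < \<eta>" using \<eta> Mpos by (simp add: field_simps)
    show "part (theta_grid M) M (-pi/2) (pi/2) d"
      unfolding part_def
    proof (intro conjI allI impI)
      show "theta_grid M 0 = -pi/2" by (simp add: theta_grid_def)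
      show "theta_grid M M = pi/2" using Mpos by (simp add: theta_grid_def)
      fix i assume i: "i < M"
      define u where "u = 2 * real i / real M - 1"
      define v where "v = 2 * real (Suc i) / real M - 1"
      have vu: "v - u = 2 / real M" using Mpos by (simp add: u_def v_def field_simps)
      have u1: "-1 \<le> u" using Mpos by (simp add: u_def field_simps)
      have v1: "v \<le> 1" using Mpos i by (simp add: v_def field_simps)
      have "2 / real M > 0" using Mpos by simp
      then have uv: "u < v" using vu by linarith
      have tg: "theta_grid M i = arcsin u" "theta_grid M (Suc i) = arcsin v"
        by (simp_all add: theta_grid_def u_def v_def)
      show "theta_grid M i < theta_grid M (Suc i)"
        unfolding tg by (rule arcsin_less_arcsin[OF u1 uv v1])
      have "dist v u < \<eta>" using vu step uv by (simp add: dist_real_def)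
      then have "dist (arcsin v) (arcsin u) < d" using U u1 v1 uv by auto
      then show "theta_grid M (Suc i) - theta_grid M i < d"
        unfolding tg dist_real_def by linarith
    qed
  qed
qed

lemma term_eq:
  assumes "m < M" "0 < Nc"
  shows "dft Nc 0 q * VM M i m * complex_of_real (Omega M Nc Ts S m q) * cnj (dft Nc 0 q * VM M j m)
    = arr_resp (theta_grid M m) i * cnj (arr_resp (theta_grid M m) j)
       * complex_of_real (S (theta_grid M m) (real q * Ts))
       * complex_of_real (theta_grid M (Suc m) - theta_grid M m)"
proof -
  have Mpos: "real M > 0" using assms by simp
  have s: "sin (theta_grid M m) = 2 * real m / real M - 1"
    unfolding theta_grid_def using assms Mpos by (intro sin_arcsin) (auto simp: field_simps)
  have dft0: "dft Nc 0 q = complex_of_real (1 / sqrt (real Nc))" by (simp add: dft_def)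
  have VMe: "VM M k m = complex_of_real (1 / sqrt (real M)) * arr_resp (theta_grid M m) k" for k
  proof -
    have "2 * pi * real k * (real m - real M / 2) / real M = pi * real k * sin (theta_grid M m)"
      unfolding s using Mpos by (simp add: field_simps)
    then show ?thesis by (simp add: VM_def arr_resp_def)
  qed
  define cN where "cN = 1 / sqrt (real Nc)"
  define cM where "cM = 1 / sqrt (real M)"
  define A where "A = arr_resp (theta_grid M m) i"
  define B where "B = arr_resp (theta_grid M m) j"
  define \<Delta> where "\<Delta> = theta_grid M (Suc m) - theta_grid M m"
  define Sv where "Sv = S (theta_grid M m) (real q * Ts)"
  have om: "Omega M Nc Ts S m q = real M * real Nc * \<Delta> * Sv" by (simp add: Omega_def \<Delta>_def Sv_def)
  have re: "cN * cM * (real M * real Nc * \<Delta> * Sv) * cN * cM = Sv * \<Delta>"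
  proof -
    have "cN * cN * real Nc = 1" using assms by (simp add: cN_def)
    moreover have "cM * cM * real M = 1" using Mpos by (simp add: cM_def)
    ultimately show ?thesis
      by (metis (no_types, lifting) mult.assoc mult.commute mult.left_commute mult_1)
  qed
  have "dft Nc 0 q * VM M i m * complex_of_real (Omega M Nc Ts S m q) * cnj (dft Nc 0 q * VM M j m)
     = (A * cnj B) * complex_of_real (cN * cM * (real M * real Nc * \<Delta> * Sv) * cN * cM)"
    unfolding dft0 VMe om cN_def[symmetric] cM_def[symmetric] A_def[symmetric] B_def[symmetric]
    by (simp add: mult_ac)
  also have "\<dots> = A * cnj B * complex_of_real Sv * complex_of_real \<Delta>"
    unfolding re by (simp add: mult_ac)
  finally show ?thesis by (simp add: A_def B_def Sv_def \<Delta>_def)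
qed


lemma approx_eq:
  assumes iM: "i < M" and jM: "j < M" and Nc: "0 < Nc"
  shows "Rk_approx M Nc Ng Ts S i j = (\<Sum>q<Ng. \<Sum>m<M.
      arr_resp (theta_grid M m) i * cnj (arr_resp (theta_grid M m) j)
       * complex_of_real (S (theta_grid M m) (real q * Ts))
       * complex_of_real (theta_grid M (Suc m) - theta_grid M m))"
proof -
  define K where "K = kron_mat M M (dft Nc) (VM M)"
  define w where "w = vec_mat M (\<lambda>a b. complex_of_real (Omega M Nc Ts S a b))"
  have inner: "(\<Sum>l'<Ng * M. K i l' * diag_mat w l' l) = K i l * w l" if "l < Ng * M" for l
  proof -
    have "(\<Sum>l'<Ng * M. K i l' * diag_mat w l' l) = (\<Sum>l'<Ng * M. if l' = l then K i l * w l else 0)"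
      by (rule sum.cong) (auto simp: diag_mat_def)
    also have "\<dots> = K i l * w l" using that by simp
    finally show ?thesis .
  qed
  have "Rk_approx M Nc Ng Ts S i j = (\<Sum>l<Ng * M. K i l * w l * cnj (K j l))"
    unfolding Rk_approx_def Let_def K_def[symmetric] w_def[symmetric] mat_mult_def mat_adj_def
    by (rule sum.cong) (auto simp: inner)
  also have "\<dots> = (\<Sum>q<Ng. \<Sum>l\<in>{q * M..<q * M + M}. K i l * w l * cnj (K j l))"
    by (rule sum.nat_group[symmetric])
  also have "\<dots> = (\<Sum>q<Ng. \<Sum>m<M. K i (q * M + m) * w (q * M + m) * cnj (K j (q * M + m)))"
  proof (rule sum.cong[OF refl])
    fix q
    have "{q * M..<q * M + M} = (\<lambda>m. q * M + m) ` {..<M}"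
    proof (auto simp: image_iff)
      fix x assume "q * M \<le> x" "x < q * M + M"
      then show "\<exists>xa\<in>{..<M}. x = q * M + xa" by (intro bexI[of _ "x - q * M"]) auto
    qed
    then show "(\<Sum>l\<in>{q * M..<q * M + M}. K i l * w l * cnj (K j l)) =
      (\<Sum>m<M. K i (q * M + m) * w (q * M + m) * cnj (K j (q * M + m)))"
      by (simp add: sum.reindex inj_on_def)
  qed
  also have "\<dots> = (\<Sum>q<Ng. \<Sum>m<M.
      arr_resp (theta_grid M m) i * cnj (arr_resp (theta_grid M m) j)
       * complex_of_real (S (theta_grid M m) (real q * Ts))
       * complex_of_real (theta_grid M (Suc m) - theta_grid M m))"
  proof (intro sum.cong refl)
    fix q m assume m: "m \<in> {..<M}"
    then have m': "m < M" by simp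
    have dm: "(q * M + m) div M = q" "(q * M + m) mod M = m" using m' by auto
    have "K i (q * M + m) * w (q * M + m) * cnj (K j (q * M + m)) =
      dft Nc 0 q * VM M i m * complex_of_real (Omega M Nc Ts S m q) * cnj (dft Nc 0 q * VM M j m)"
      using iM jM unfolding K_def w_def kron_mat_def vec_mat_def dm by simp
    also have "\<dots> = arr_resp (theta_grid M m) i * cnj (arr_resp (theta_grid M m) j)
       * complex_of_real (S (theta_grid M m) (real q * Ts))
       * complex_of_real (theta_grid M (Suc m) - theta_grid M m)"
      by (rule term_eq[OF m' Nc])
    finally show "K i (q * M + m) * w (q * M + m) * cnj (K j (q * M + m)) = \<dots>" .
  qed
  finally show ?thesis .
qed

lemma Rk_eq:
  assumes iM: "i < M" and jM: "j < M"
  shows "Rk M Nc Ng Ts S i j = (\<Sum>q<Ng. integral {-pi/2..pi/2}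
      (\<lambda>\<theta>. arr_resp \<theta> i * cnj (arr_resp \<theta> j) * complex_of_real (S \<theta> (real q * Ts))))"
  using iM jM by (simp add: Rk_def outer_def kron_vec_def fcol_def)


theorem proposition1:
  fixes Nc Ng :: nat and Ts :: real and S :: "real \<Rightarrow> real \<Rightarrow> real" and i j :: nat
  assumes "0 < Nc" and "0 < Ng" and "Ng \<le> Nc" and "0 < Ts"
    and "\<And>\<theta> q. \<theta> \<in> {-pi/2..pi/2} \<Longrightarrow> q < Ng \<Longrightarrow> 0 \<le> S \<theta> (real q * Ts)"
    and "\<exists>B. \<forall>\<theta>\<in>{-pi/2..pi/2}. \<forall>q<Ng. \<bar>S \<theta> (real q * Ts)\<bar> \<le> B"
    and "\<And>q. q < Ng \<Longrightarrow> riemann_integrable (\<lambda>\<theta>. S \<theta> (real q * Ts)) (-pi/2) (pi/2)"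
  shows "(\<lambda>M. Rk M Nc Ng Ts S i j - Rk_approx M Nc Ng Ts S i j) \<longlonglongrightarrow> 0"
proof -
  obtain B where B: "\<forall>\<theta>\<in>{-pi/2..pi/2}. \<forall>q<Ng. \<bar>S \<theta> (real q * Ts)\<bar> \<le> B" using assms(6) by blast
  define g where "g \<theta> = arr_resp \<theta> i * cnj (arr_resp \<theta> j)" for \<theta>
  have gc: "continuous_on {-pi/2..pi/2} g"
    unfolding g_def arr_resp_def by (intro continuous_intros)
  define J where "J q = integral {-pi/2..pi/2} (\<lambda>y. g y * complex_of_real (S y (real q * Ts)))" for q
  define T where "T q M = (\<Sum>m<M. g (theta_grid M m) * complex_of_real (S (theta_grid M m) (real q * Ts))
       * complex_of_real (theta_grid M (Suc m) - theta_grid M m))" for q M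
  have ab: "-pi/2 < pi/2" using pi_gt_zero by linarith
  have lim: "(\<lambda>M. J q - T q M) \<longlonglongrightarrow> 0" if q: "q < Ng" for q
  proof (rule tendstoI)
    fix e :: real assume e: "e > 0"
    obtain I where R: "riemann_has_integral (\<lambda>\<theta>. S \<theta> (real q * Ts)) (-pi/2) (pi/2) I"
      using assms(7)[OF q] unfolding riemann_integrable_def by blast
    have fb: "\<forall>y\<in>{-pi/2..pi/2}. \<bar>S y (real q * Ts)\<bar> \<le> B" using B q by blast
    obtain d where d: "d > 0" and D: "\<And>n x. part x n (-pi/2) (pi/2) d \<Longrightarrow>
      norm (J q - (\<Sum>i<n. g (x i) * of_real (S (x i) (real q * Ts)) * of_real (x (Suc i) - x i))) < e"
      using conv[OF ab R fb gc e] unfolding J_def by blast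
    show "eventually (\<lambda>M. dist (J q - T q M) 0 < e) sequentially"
      using mesh[OF d] by eventually_elim (use D in \<open>auto simp: T_def\<close>)
  qed
  have "(\<lambda>M. \<Sum>q<Ng. J q - T q M) \<longlonglongrightarrow> (\<Sum>q<Ng. 0)"
    by (rule tendsto_sum) (use lim in auto)
  then have L: "(\<lambda>M. \<Sum>q<Ng. J q - T q M) \<longlonglongrightarrow> 0" by simp
  have ev: "eventually (\<lambda>M. (\<Sum>q<Ng. J q - T q M) = Rk M Nc Ng Ts S i j - Rk_approx M Nc Ng Ts S i j) sequentially"
    unfolding eventually_sequentially
  proof (intro exI[of _ "Suc (max i j)"] allI impI)
    fix M assume M: "Suc (max i j) \<le> M"
    then have iM: "i < M" and jM: "j < M" by auto
    show "(\<Sum>q<Ng. J q - T q M) = Rk M Nc Ng Ts S i j - Rk_approx M Nc Ng Ts S i j"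
      unfolding Rk_eq[OF iM jM] approx_eq[OF iM jM assms(1)] J_def T_def g_def
      by (simp add: sum_subtractf)
  qed
  show ?thesis by (rule Lim_transform_eventually[OF L ev])
qed

end
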